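(* Let $\alpha,\beta$ be real numbers with $\beta\le\alpha<1$ and $\alpha>0$. Then the $\beta$-Ces\`aro operator $C_\beta$ maps $\mathcal{B}_\alpha^0$ into $\mathcal{B}_\alpha^0$ and is a bounded linear operator from $(\mathcal{B}_\alpha^0,\|\cdot\|_{\mathcal{B}_\alpha})$ to itself.
   Context: $\mathbb{D}=\{z\in\mathbb{C}:|z|<1\}$. For $\alpha>0$, the $\alpha$-Bloch space $\mathcal{B}_\alpha$ is the space of analytic functions $f$ on $\mathbb{D}$ with $\|f\|_{\mathcal{B}_\alpha}:=\sup_{z\in\mathbb{D}}(1-|z|^2)^\alpha|f'(z)|<\infty$. $\mathcal{B}_\alpha^0=\{f\in\mathcal{B}_\alpha: f(0)=0\}$, normed by $\|\cdot\|_{\mathcal{B}_\alpha}$. For $\beta\in\mathbb{R}$, the $\beta$-Ces\`aro operator is $C_\beta(f)(z)=\int_0^z \frac{f(w)}{w(1-w)^\beta}\,dw$ for analytic $f$ on $\mathbb{D}$ with $f(0)=0$, where $(1-w)^{\beta}$ is defined by the principal branch. *)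

theory Defs
  imports "HOL-Complex_Analysis.Complex_Analysis"
begin

definition bloch_norm :: "real \<Rightarrow> (complex \<Rightarrow> complex) \<Rightarrow> real" where
  "bloch_norm \<alpha> f = (SUP z\<in>ball 0 1. (1 - (cmod z)^2) powr \<alpha> * cmod (deriv f z))"

definition bloch :: "real \<Rightarrow> (complex \<Rightarrow> complex) set" where
  "bloch \<alpha> = {f. f holomorphic_on ball 0 1 \<and>
      bdd_above ((\<lambda>z. (1 - (cmod z)^2) powr \<alpha> * cmod (deriv f z)) ` ball 0 1)}"

definition bloch0 :: "real \<Rightarrow> (complex \<Rightarrow> complex) set" where
  "bloch0 \<alpha> = {f \<in> bloch \<alpha>. f 0 = 0}"

text \<open>beta-Cesaro operator: integral from 0 to z along the segment; powr on complex
  numbers is the principal branch.\<close>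
definition cesaro :: "real \<Rightarrow> (complex \<Rightarrow> complex) \<Rightarrow> complex \<Rightarrow> complex" where
  "cesaro \<beta> f z = contour_integral (linepath 0 z)
      (\<lambda>w. f w / (w * (1 - w) powr complex_of_real \<beta>))"

end

theory Submission
  imports Defs
begin

lemma key_bound:
  fixes f :: "complex \<Rightarrow> complex" and \<alpha> N :: real
  assumes hol: "f holomorphic_on ball 0 1" and f0: "f 0 = 0"
    and a0: "0 < \<alpha>" and a1: "\<alpha> < 1"
    and bnd: "\<And>w. w \<in> ball 0 1 \<Longrightarrow> (1 - (cmod w)^2) powr \<alpha> * cmod (deriv f w) \<le> N"
    and z: "cmod z < 1"
  shows "cmod (f z) \<le> N * cmod z / (1 - \<alpha>)"
proof -
  have N0: "0 \<le> N" 
  proof -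
    have "cmod (deriv f 0) \<le> N" using bnd[of 0] by simp
    then show ?thesis using norm_ge_zero order_trans by blast
  qed
  define r where "r = cmod z"
  have r0: "0 \<le> r" and r1: "r < 1" using z by (auto simp: r_def)
  define G where "G = (\<lambda>t::real. f (of_real t * z))"
  define \<phi> where "\<phi> = (\<lambda>t::real. N * (1 - (1 - t*r) powr (1-\<alpha>)) / (1-\<alpha>))"
  have pos: "0 < 1 - t*r" if "t \<in> {0..1}" for t
  proof -
    have "t*r \<le> r" using that r0 by (simp add: mult_left_le_one_le)
    then show ?thesis using r1 by linarith
  qed
  have inball: "of_real t * z \<in> ball 0 1" if "t \<in> {0..1}" for t
  proof -
    have "cmod (of_real t * z) = t * r" using that by (simp add: r_def norm_mult)
    then show ?thesis using pos[OF that] r0 that by (auto simp: dist_norm)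
  qed
  have fd: "(f has_field_derivative deriv f w) (at w)" if "w \<in> ball 0 1" for w
    using hol that by (meson holomorphic_derivI open_ball)
  have Gd: "(G has_vector_derivative (deriv f (of_real t * z) * z)) (at t)" if "t \<in> {0..1}" for t
  proof -
    have "((\<lambda>t::real. of_real t * z) has_vector_derivative z) (at t)"
      by (auto intro!: derivative_eq_intros)
    from field_vector_diff_chain_at[OF this fd[OF inball[OF that]]]
    show ?thesis unfolding G_def by (simp add: o_def mult.commute)
  qed
  have Gc: "continuous_on {0..1} G"
    using Gd by (meson continuous_at_imp_continuous_on has_vector_derivative_continuous)
  have \<phi>d: "(\<phi> has_vector_derivative (N * r * (1 - t*r) powr (-\<alpha>))) (at t)" if "t \<in> {0..1}" for t
  proof -
    have "(\<phi> has_real_derivative (N * ((1-\<alpha>) * (1 - t*r) powr (1-\<alpha>-1) * r)) / (1-\<alpha>)) (at t)"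
      unfolding \<phi>_def using pos[OF that]
      by (auto intro!: derivative_eq_intros)
    moreover have "(N * ((1-\<alpha>) * (1 - t*r) powr (1-\<alpha>-1) * r)) / (1-\<alpha>) = N * r * (1 - t*r) powr (-\<alpha>)"
      using a1 by (simp add: field_simps)
    ultimately show ?thesis by (simp add: has_real_derivative_iff_has_vector_derivative)
  qed
  have \<phi>c: "continuous_on {0..1} \<phi>"
    using \<phi>d by (meson continuous_at_imp_continuous_on has_vector_derivative_continuous)
  have B: "norm (deriv f (of_real t * z) * z) \<le> N * r * (1 - t*r) powr (-\<alpha>)" if "t \<in> {0..1}" for t
  proof -
    let ?w = "of_real t * z"
    have cw: "cmod ?w = t * r" using that by (simp add: r_def norm_mult)
    have tr0: "0 \<le> t*r" using r0 that by simp
    have tr1: "t*r < 1" using pos[OF that] by simp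
    have sq: "(t*r)^2 \<le> t*r" unfolding power2_eq_square
      by (rule mult_left_le_one_le) (use tr0 tr1 in auto)
    have p1: "0 < 1 - (t*r)^2" using sq tr1 by linarith
    have le: "1 - t*r \<le> 1 - (t*r)^2" using sq by linarith
    have "(1 - (t*r)^2) powr \<alpha> * cmod (deriv f ?w) \<le> N" using bnd[OF inball[OF that]] cw by simp
    then have "cmod (deriv f ?w) \<le> N / (1 - (t*r)^2) powr \<alpha>"
      using p1 by (simp add: field_simps)
    also have "\<dots> \<le> N / (1 - t*r) powr \<alpha>"
    proof (rule divide_left_mono)
      show "(1 - t*r) powr \<alpha> \<le> (1 - (t*r)^2) powr \<alpha>" using le pos[OF that] a0 by (simp add: powr_mono2)
      show "0 \<le> N" by (rule N0)
      show "0 < (1 - (t*r)^2) powr \<alpha> * (1 - t*r) powr \<alpha>" using p1 pos[OF that] by simp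
    qed
    also have "\<dots> = N * (1 - t*r) powr (-\<alpha>)" by (simp add: powr_minus field_simps)
    finally have "cmod (deriv f ?w) \<le> N * (1 - t*r) powr (-\<alpha>)" .
    then have "cmod (deriv f ?w) * r \<le> N * (1 - t*r) powr (-\<alpha>) * r" using r0 by (simp add: mult_right_mono)
    then show ?thesis by (simp add: norm_mult r_def[symmetric] mult.commute mult.left_commute)
  qed
  have "norm (G 1 - G 0) \<le> \<phi> 1 - \<phi> 0"
    by (rule differentiable_bound_general[OF zero_less_one Gc \<phi>c,
        where f'="\<lambda>t. deriv f (of_real t * z) * z" and \<phi>'="\<lambda>t. N * r * (1 - t*r) powr (-\<alpha>)"])
       (use Gd \<phi>d B in auto)
  then have "cmod (f z) \<le> N * (1 - (1 - r) powr (1-\<alpha>)) / (1-\<alpha>)"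
    by (simp add: G_def \<phi>_def f0)
  also have "\<dots> \<le> N * r / (1-\<alpha>)"
  proof -
    have "1 - r \<le> (1 - r) powr (1-\<alpha>)"
      using powr_mono'[of "1-\<alpha>" 1 "1-r"] r1 r0 a0 a1 by simp
    moreover note N0
    ultimately show ?thesis using a1 by (simp add: divide_right_mono mult_left_mono)
  qed
  finally show ?thesis by (simp add: r_def)
qed

lemma prim:
  assumes hol: "h holomorphic_on ball 0 1" and x: "x \<in> ball (0::complex) 1"
  shows "((\<lambda>x. contour_integral (linepath 0 x) h) has_field_derivative h x) (at x)"
proof -
  let ?S = "ball (0::complex) 1"
  have contf: "continuous_on ?S h" using hol holomorphic_on_imp_continuous_on by blast
  have a_cs: "\<And>y. y \<in> ?S \<Longrightarrow> closed_segment 0 y \<subseteq> ?S"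
    by (meson centre_in_ball convex_ball convex_contains_segment zero_less_one)
  { fix b c
    assume "closed_segment b c \<subseteq> ?S"
    then have abcs: "convex hull {0, b, c} \<subseteq> ?S"
      by (intro hull_minimal) (use ends_in_segment in auto)
    then have "(h has_contour_integral 0) (linepath 0 b +++ linepath b c +++ linepath c 0)"
      using Cauchy_theorem_triangle[of h 0 b c] hol holomorphic_on_subset by blast
  } note 0 = this
  show ?thesis
    using "0" a_cs contf has_chain_integral_chain_integral3 x
      triangle_contour_integrals_starlike_primitive[OF contf _ open_ball x]
    by (metis centre_in_ball zero_less_one)
qed

lemma spike0:
  assumes "\<And>w. w \<noteq> 0 \<Longrightarrow> F w = H w"
  shows "(F has_contour_integral i) (linepath 0 z) \<longleftrightarrow> (H has_contour_integral i) (linepath 0 z)"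
  unfolding has_contour_integral_linepath
proof (rule has_integral_spike_finite_eq[of "{0}"])
  fix t :: real assume t: "t \<in> {0..1} - {0}"
  show "H (linepath 0 z t) * (z - 0) = F (linepath 0 z t) * (z - 0)"
  proof (cases "z = 0")
    case False
    then have "linepath 0 z t \<noteq> 0" using t by (simp add: linepath_def)
    then show ?thesis using assms by simp
  qed simp
qed simp

definition Hf :: "real \<Rightarrow> (complex \<Rightarrow> complex) \<Rightarrow> complex \<Rightarrow> complex" where
  "Hf \<beta> f w = (if w = 0 then deriv f 0 else f w / w) / (1 - w) powr complex_of_real \<beta>"

lemma nonpos_ok: "w \<in> ball (0::complex) 1 \<Longrightarrow> 1 - w \<notin> \<real>\<^sub>\<le>\<^sub>0"
proof
  assume w: "w \<in> ball (0::complex) 1" and "1 - w \<in> \<real>\<^sub>\<le>\<^sub>0"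
  then obtain r where r: "1 - w = complex_of_real r" "r \<le> 0" by (auto simp: nonpos_Reals_def)
  then have "Re (1 - w) = r" by simp
  then have "Re (1 - w) \<le> 0" using r by simp
  moreover have "Re w < 1" using w complex_Re_le_cmod[of w] by (auto simp: dist_norm)
  ultimately show False by simp
qed

lemma Hf_hol:
  assumes "f holomorphic_on ball 0 1" "f 0 = 0"
  shows "Hf \<beta> f holomorphic_on ball 0 1"
proof -
  have h1: "(\<lambda>z. if z = 0 then deriv f 0 else (f z - f 0)/(z-0)) holomorphic_on ball 0 1"
    by (rule pole_lemma_open[OF assms(1) open_ball])
  have e: "(\<lambda>z. if z = 0 then deriv f 0 else (f z - f 0)/(z-0)) = (\<lambda>z. if z = 0 then deriv f 0 else f z / z)"
    using assms(2) by auto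
  have h2: "(\<lambda>w. (1 - w) powr complex_of_real \<beta>) holomorphic_on ball 0 1"
    by (rule holomorphic_on_powr) (auto intro!: holomorphic_intros nonpos_ok)
  have nz: "(1 - w) powr complex_of_real \<beta> \<noteq> 0" if "w \<in> ball 0 1" for w
    using nonpos_ok[OF that] by (auto simp: powr_def)
  show ?thesis unfolding Hf_def
    using holomorphic_on_divide[OF h1[unfolded e] h2 nz] by simp
qed

lemma cesaro_has:
  assumes "f holomorphic_on ball 0 1" "f 0 = 0" "z \<in> ball 0 1"
  shows "((\<lambda>w. f w / (w * (1 - w) powr complex_of_real \<beta>)) has_contour_integral
           contour_integral (linepath 0 z) (Hf \<beta> f)) (linepath 0 z)"
proof -
  have seg: "closed_segment 0 z \<subseteq> ball 0 1"
    using assms(3) by (meson centre_in_ball convex_ball convex_contains_segment zero_less_one)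
  have "continuous_on (closed_segment 0 z) (Hf \<beta> f)"
    using Hf_hol[OF assms(1,2)] holomorphic_on_imp_continuous_on continuous_on_subset seg by blast
  then have "(Hf \<beta> f has_contour_integral contour_integral (linepath 0 z) (Hf \<beta> f)) (linepath 0 z)"
    using contour_integrable_continuous_linepath has_contour_integral_integral by blast
  then show ?thesis
    by (subst spike0[where H="Hf \<beta> f"]) (auto simp: Hf_def)
qed

lemma cesaro_eq:
  assumes "f holomorphic_on ball 0 1" "f 0 = 0" "z \<in> ball 0 1"
  shows "cesaro \<beta> f z = contour_integral (linepath 0 z) (Hf \<beta> f)"
  unfolding cesaro_def using cesaro_has[OF assms] contour_integral_unique by blast

lemma cesaro_deriv:
  assumes "f holomorphic_on ball 0 1" "f 0 = 0" "z \<in> ball 0 1"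
  shows "(cesaro \<beta> f has_field_derivative Hf \<beta> f z) (at z)"
  by (rule has_field_derivative_transform_within_open[OF prim[OF Hf_hol[OF assms(1,2)] assms(3)] open_ball assms(3)])
     (simp add: cesaro_eq[OF assms(1,2)])

lemma weight:
  fixes z :: complex and \<alpha> \<beta> :: real
  assumes "\<beta> \<le> \<alpha>" "0 < \<alpha>" "\<alpha> < 1" "cmod z < 1"
  shows "(1 - (cmod z)^2) powr \<alpha> / cmod (1 - z) powr \<beta> \<le> 2 powr \<bar>\<beta>\<bar> + 2"
proof -
  define r where "r = cmod z"
  have r0: "0 \<le> r" and r1: "r < 1" using assms(4) by (auto simp: r_def)
  have d1: "1 - r \<le> cmod (1 - z)" using norm_triangle_ineq2[of 1 z] by (simp add: r_def)
  have d2: "cmod (1 - z) \<le> 2" using norm_triangle_ineq4[of 1 z] r1 by (simp add: r_def)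
  have dpos: "0 < cmod (1 - z)" using d1 r1 by linarith
  have sq: "r^2 \<le> 1" using r0 r1 by (simp add: power_le_one)
  have "r^2 \<le> r" unfolding power2_eq_square by (rule mult_left_le_one_le) (use r0 r1 in auto)
  then have w0: "0 < 1 - r^2" using r1 by linarith
  show ?thesis
  proof (cases "\<beta> \<le> 0")
    case True
    have "(1 - r^2) powr \<alpha> \<le> 1" using w0 r0 assms(2) by (intro powr_le1) (auto simp: abs_if)
    moreover have "1 / cmod (1 - z) powr \<beta> = cmod (1 - z) powr (-\<beta>)" by (simp add: powr_minus divide_inverse)
    moreover have "cmod (1 - z) powr (-\<beta>) \<le> 2 powr (-\<beta>)" using True dpos d2 by (intro powr_mono2) auto
    moreover have "2 powr (-\<beta>) = 2 powr \<bar>\<beta>\<bar>" using True by simp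
    ultimately have "(1 - r^2) powr \<alpha> * (1 / cmod (1 - z) powr \<beta>) \<le> 1 * 2 powr \<bar>\<beta>\<bar>"
      by (intro mult_mono) auto
    then show ?thesis by (simp add: r_def)
  next
    case False
    have "(1 - r^2) = (1 - r) * (1 + r)" by (simp add: power2_eq_square algebra_simps)
    then have "(1 - r^2) powr \<alpha> = (1 - r) powr \<alpha> * (1 + r) powr \<alpha>" using r0 r1 by (simp add: powr_mult)
    also have "\<dots> \<le> (1 - r) powr \<beta> * 2 powr 1"
    proof (intro mult_mono)
      show "(1 - r) powr \<alpha> \<le> (1 - r) powr \<beta>" using powr_mono'[of \<beta> \<alpha> "1-r"] assms r0 r1 by simp
      show "(1 + r) powr \<alpha> \<le> 2 powr 1"
      proof -
        have "(1 + r) powr \<alpha> \<le> 2 powr \<alpha>" using r0 r1 assms by (intro powr_mono2) auto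
        also have "\<dots> \<le> 2 powr 1" using assms by (intro powr_mono) auto
        finally show ?thesis .
      qed
    qed auto
    also have "\<dots> \<le> cmod (1 - z) powr \<beta> * 2"
      using False d1 r1 by (simp add: powr_mono2)
    finally have "(1 - r^2) powr \<alpha> / cmod (1 - z) powr \<beta> \<le> 2"
      using dpos by (simp add: divide_le_eq mult.commute)
    moreover have "0 \<le> 2 powr \<bar>\<beta>\<bar>" by simp
    ultimately show ?thesis unfolding r_def by linarith
  qed
qed

lemma bloch_bnd:
  assumes "f \<in> bloch \<alpha>" "w \<in> ball 0 1"
  shows "(1 - (cmod w)^2) powr \<alpha> * cmod (deriv f w) \<le> bloch_norm \<alpha> f"
  using assms unfolding bloch_def bloch_norm_def by (auto intro!: cSUP_upper)

lemma pt:
  fixes \<alpha> \<beta> :: real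
  assumes ab: "\<beta> \<le> \<alpha>" and a1: "\<alpha> < 1" and a0: "0 < \<alpha>"
    and f: "f \<in> bloch0 \<alpha>" and z: "z \<in> ball 0 1"
  shows "(1 - (cmod z)^2) powr \<alpha> * cmod (deriv (cesaro \<beta> f) z)
           \<le> (2 powr \<bar>\<beta>\<bar> + 2) / (1 - \<alpha>) * bloch_norm \<alpha> f"
proof -
  define N where "N = bloch_norm \<alpha> f"
  have hol: "f holomorphic_on ball 0 1" and f0: "f 0 = 0" and fb: "f \<in> bloch \<alpha>"
    using f by (auto simp: bloch0_def bloch_def)
  have bnd: "\<And>w. w \<in> ball 0 1 \<Longrightarrow> (1 - (cmod w)^2) powr \<alpha> * cmod (deriv f w) \<le> N"
    using bloch_bnd[OF fb] by (simp add: N_def)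
  have N0: "0 \<le> N"
  proof -
    have "cmod (deriv f 0) \<le> N" using bnd[of 0] by simp
    then show ?thesis using norm_ge_zero order_trans by blast
  qed
  define C where "C = (2 powr \<bar>\<beta>\<bar> + 2) / (1 - \<alpha>)"
  have C2: "2 \<le> C" using a1 a0 unfolding C_def
    by (simp add: le_divide_eq) (smt (verit) powr_ge_zero)
  have dz: "deriv (cesaro \<beta> f) z = Hf \<beta> f z"
    using cesaro_deriv[OF hol f0 z] by (rule DERIV_imp_deriv)
  have "(1 - (cmod z)^2) powr \<alpha> * cmod (Hf \<beta> f z) \<le> C * N"
  proof (cases "z = 0")
    case True
    have "cmod (deriv f 0) \<le> N" using bnd[of 0] by simp
    also have "\<dots> \<le> C * N" using C2 N0 by (simp add: mult_right_mono[of 1 C N, simplified])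
    finally show ?thesis using True by (simp add: Hf_def)
  next
    case False
    have zn: "cmod z < 1" using z by simp
    have fz: "cmod (f z) \<le> N * cmod z / (1 - \<alpha>)"
      by (rule key_bound[OF hol f0 a0 a1 bnd zn])
    have q: "cmod (f z) / cmod z \<le> N / (1 - \<alpha>)"
      using fz False by (simp add: divide_le_eq field_simps)
    have W: "(1 - (cmod z)^2) powr \<alpha> / cmod (1 - z) powr \<beta> \<le> 2 powr \<bar>\<beta>\<bar> + 2"
      by (rule weight[OF ab a0 a1 zn])
    have nH: "cmod (Hf \<beta> f z) = cmod (f z) / cmod z / cmod (1 - z) powr \<beta>"
      using False by (simp add: Hf_def norm_divide norm_mult norm_powr_real_powr')
    have "(1 - (cmod z)^2) powr \<alpha> * cmod (Hf \<beta> f z)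
        = (cmod (f z) / cmod z) * ((1 - (cmod z)^2) powr \<alpha> / cmod (1 - z) powr \<beta>)"
      unfolding nH by simp
    also have "\<dots> \<le> (N / (1 - \<alpha>)) * (2 powr \<bar>\<beta>\<bar> + 2)"
      by (rule mult_mono[OF q W]) (use N0 a1 in auto)
    also have "\<dots> = C * N" by (simp add: C_def)
    finally show ?thesis .
  qed
  then show ?thesis by (simp add: dz C_def N_def)
qed

theorem theorem2p2:
  fixes \<alpha> \<beta> :: real
  assumes "\<beta> \<le> \<alpha>" and "\<alpha> < 1" and "0 < \<alpha>"
  shows "(\<forall>f \<in> bloch0 \<alpha>. cesaro \<beta> f \<in> bloch0 \<alpha>)
    \<and> (\<forall>f \<in> bloch0 \<alpha>. \<forall>g \<in> bloch0 \<alpha>. \<forall>a b :: complex. \<forall>z \<in> ball 0 1.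
          cesaro \<beta> (\<lambda>w. a * f w + b * g w) z = a * cesaro \<beta> f z + b * cesaro \<beta> g z)
    \<and> (\<exists>C::real. \<forall>f \<in> bloch0 \<alpha>. bloch_norm \<alpha> (cesaro \<beta> f) \<le> C * bloch_norm \<alpha> f)"
proof (intro conjI)
  have holc: "cesaro \<beta> f holomorphic_on ball 0 1" if "f \<in> bloch0 \<alpha>" for f
  proof -
    have "f holomorphic_on ball 0 1" "f 0 = 0" using that by (auto simp: bloch0_def bloch_def)
    then show ?thesis
      using cesaro_deriv by (meson holomorphic_on_open open_ball)
  qed
  show "\<forall>f \<in> bloch0 \<alpha>. cesaro \<beta> f \<in> bloch0 \<alpha>"
  proof
    fix f assume f: "f \<in> bloch0 \<alpha>"
    have "bdd_above ((\<lambda>z. (1 - (cmod z)^2) powr \<alpha> * cmod (deriv (cesaro \<beta> f) z)) ` ball 0 1)"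
      using pt[OF assms f] by (intro bdd_aboveI2) auto
    moreover have "cesaro \<beta> f 0 = 0" unfolding cesaro_def by simp
    ultimately show "cesaro \<beta> f \<in> bloch0 \<alpha>" using holc[OF f] by (simp add: bloch0_def bloch_def)
  qed
  show "\<forall>f \<in> bloch0 \<alpha>. \<forall>g \<in> bloch0 \<alpha>. \<forall>a b :: complex. \<forall>z \<in> ball 0 1.
          cesaro \<beta> (\<lambda>w. a * f w + b * g w) z = a * cesaro \<beta> f z + b * cesaro \<beta> g z"
  proof (intro ballI allI)
    fix f g a b z assume f: "f \<in> bloch0 \<alpha>" and g: "g \<in> bloch0 \<alpha>" and z: "z \<in> ball (0::complex) 1"
    have hf: "f holomorphic_on ball 0 1" "f 0 = 0" using f by (auto simp: bloch0_def bloch_def)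
    have hg: "g holomorphic_on ball 0 1" "g 0 = 0" using g by (auto simp: bloch0_def bloch_def)
    have If: "((\<lambda>w. f w / (w * (1 - w) powr complex_of_real \<beta>)) has_contour_integral cesaro \<beta> f z) (linepath 0 z)"
      using cesaro_has[OF hf z] cesaro_eq[OF hf z] by simp
    have Ig: "((\<lambda>w. g w / (w * (1 - w) powr complex_of_real \<beta>)) has_contour_integral cesaro \<beta> g z) (linepath 0 z)"
      using cesaro_has[OF hg z] cesaro_eq[OF hg z] by simp
    have "((\<lambda>w. a * (f w / (w * (1 - w) powr complex_of_real \<beta>)) + b * (g w / (w * (1 - w) powr complex_of_real \<beta>)))
          has_contour_integral (a * cesaro \<beta> f z + b * cesaro \<beta> g z)) (linepath 0 z)"
      by (intro has_contour_integral_add has_contour_integral_lmul If Ig)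
    moreover have "(\<lambda>w. a * (f w / (w * (1 - w) powr complex_of_real \<beta>)) + b * (g w / (w * (1 - w) powr complex_of_real \<beta>)))
        = (\<lambda>w. (a * f w + b * g w) / (w * (1 - w) powr complex_of_real \<beta>))"
      by (simp add: add_divide_distrib)
    ultimately show "cesaro \<beta> (\<lambda>w. a * f w + b * g w) z = a * cesaro \<beta> f z + b * cesaro \<beta> g z"
      unfolding cesaro_def using contour_integral_unique by auto
  qed
  show "\<exists>C::real. \<forall>f \<in> bloch0 \<alpha>. bloch_norm \<alpha> (cesaro \<beta> f) \<le> C * bloch_norm \<alpha> f"
  proof (intro exI ballI)
    fix f assume f: "f \<in> bloch0 \<alpha>"
    show "bloch_norm \<alpha> (cesaro \<beta> f) \<le> (2 powr \<bar>\<beta>\<bar> + 2) / (1 - \<alpha>) * bloch_norm \<alpha> f"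
      unfolding bloch_norm_def[of \<alpha> "cesaro \<beta> f"]
      by (rule cSUP_least) (use pt[OF assms f] in \<open>auto simp: bloch_norm_def\<close>)
  qed
qed

end
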